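(* Let $\mathbb{V}$ be a BIT speciale variety, $A$ a $\mathbb{V}$-algebra and $H$ a subset of $A$ with $0\in H$. Then for every $a\in A$, the equivalence class of $a$ with respect to $\sim_H$ is contained in $\theta(H,\dots,H,a)$.
   Context: BIT speciale: the algebraic theory of $\mathbb{V}$ contains a constant $0$ and, for some $n\ge1$, binary terms $\alpha_1,\dots,\alpha_n$ and an $(n+1)$-ary term $\theta$ such that $\alpha_i(x,x)=0$ ($1\le i\le n$) and $\theta(\alpha_1(x,y),\dots,\alpha_n(x,y),y)=x$ are identities of $\mathbb{V}$. Notation: $\theta(H,\dots,H,a)=\{\theta(h_1,\dots,h_n,a)\mid h_1,\dots,h_n\in H\}$. For $a,b\in A$, $a\sim_H b$ iff $\theta(H,\dots,H,a)=\theta(H,\dots,H,b)$. *)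

theory Defs
  imports Main
begin

text \<open>An algebra of a BIT speciale variety, represented by its carrier A together with
  the interpretations on A of the term operations from the definition:
  the constant zero, the binary terms alpha 1, ..., alpha n, and the (n+1)-ary term theta,
  whose first n arguments are given as a list of length n.\<close>

definition bit_speciale_algebra ::
  "'a set \<Rightarrow> nat \<Rightarrow> 'a \<Rightarrow> (nat \<Rightarrow> 'a \<Rightarrow> 'a \<Rightarrow> 'a) \<Rightarrow> ('a list \<Rightarrow> 'a \<Rightarrow> 'a) \<Rightarrow> bool" where
  "bit_speciale_algebra A n zero alpha theta \<longleftrightarrow>
     n \<ge> 1 \<and>
     zero \<in> A \<and>
     (\<forall>i\<in>{1..n}. \<forall>x\<in>A. \<forall>y\<in>A. alpha i x y \<in> A) \<and>
     (\<forall>hs y. length hs = n \<and> set hs \<subseteq> A \<and> y \<in> A \<longrightarrow> theta hs y \<in> A) \<and>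
     (\<forall>i\<in>{1..n}. \<forall>x\<in>A. alpha i x x = zero) \<and>
     (\<forall>x\<in>A. \<forall>y\<in>A. theta (map (\<lambda>i. alpha i x y) [1..<n+1]) y = x)"

definition theta_set :: "nat \<Rightarrow> ('a list \<Rightarrow> 'a \<Rightarrow> 'a) \<Rightarrow> 'a set \<Rightarrow> 'a \<Rightarrow> 'a set" where
  "theta_set n theta H a = {theta hs a | hs. length hs = n \<and> set hs \<subseteq> H}"

definition sim_H :: "nat \<Rightarrow> ('a list \<Rightarrow> 'a \<Rightarrow> 'a) \<Rightarrow> 'a set \<Rightarrow> 'a \<Rightarrow> 'a \<Rightarrow> bool" where
  "sim_H n theta H a b \<longleftrightarrow> theta_set n theta H a = theta_set n theta H b"

end

theory Submission
  imports Defs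
begin

theorem lemma2p2:
  fixes A H :: "'a set" and n :: nat and zero :: 'a
    and alpha :: "nat \<Rightarrow> 'a \<Rightarrow> 'a \<Rightarrow> 'a" and theta :: "'a list \<Rightarrow> 'a \<Rightarrow> 'a"
  assumes "bit_speciale_algebra A n zero alpha theta"
    and "H \<subseteq> A" and "zero \<in> H"
    and "a \<in> A"
  shows "{b \<in> A. sim_H n theta H a b} \<subseteq> theta_set n theta H a"
proof
  fix b assume "b \<in> {b \<in> A. sim_H n theta H a b}"
  hence b: "b \<in> A" and s: "theta_set n theta H a = theta_set n theta H b"
    by (auto simp: sim_H_def)
  have m: "map (\<lambda>i. alpha i b b) [1..<n+1] = replicate n zero"
  proof (rule nth_equalityI)
    show "length (map (\<lambda>i. alpha i b b) [1..<n+1]) = length (replicate n zero)" by simp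
  next
    fix i assume "i < length (map (\<lambda>i. alpha i b b) [1..<n+1])"
    hence i: "i < n" by (simp del: upt_Suc)
    have "map (\<lambda>i. alpha i b b) [1..<n+1] ! i = alpha (Suc i) b b"
      using i by (simp del: upt_Suc)
    also have "\<dots> = zero" using assms(1) b i by (simp add: bit_speciale_algebra_def)
    finally show "map (\<lambda>i. alpha i b b) [1..<n+1] ! i = replicate n zero ! i" using i by simp
  qed
  have "theta (map (\<lambda>i. alpha i b b) [1..<n+1]) b = b"
    using assms(1) b unfolding bit_speciale_algebra_def by blast
  hence "theta (replicate n zero) b = b" using m by simp
  hence "b \<in> theta_set n theta H b"
    unfolding theta_set_def using assms(3)
    by (auto intro!: exI[of _ "replicate n zero"])
  thus "b \<in> theta_set n theta H a" using s by simp
qed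

end
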